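(* Let $\mathscr{C}$ be a graph class containing all trees. Then for every real $\alpha\ge1$, no algorithm is a $0$-uniform $\alpha$-approximation for Minimum Dominating Set on $\mathscr{C}$; that is, there is no map $\mathsf{A}$ assigning to each $G\in\mathscr{C}$ a dominating set $\mathsf{A}(G)$ with $|\mathsf{A}(G)|\le\alpha\,\mathrm{MDS}(G)$ such that $|\mathsf{A}(G)\cap S|\le\alpha\,\mathrm{MDS}(G,S)$ for all $G\in\mathscr{C}$ and $S\subseteq V(G)$.
   Context: $\mathrm{MDS}(G,S)$ is the minimum size of a set $X\subseteq V(G)$ such that every vertex of $S$ is in $X$ or adjacent to a vertex of $X$; $\mathrm{MDS}(G)=\mathrm{MDS}(G,V(G))$. *)

theory Defs
  imports Complex_Main
begin

type_synonym 'a graph = "'a set \<times> ('a \<Rightarrow> 'a \<Rightarrow> bool)"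

definition verts :: "'a graph \<Rightarrow> 'a set" where "verts G = fst G"
definition adj :: "'a graph \<Rightarrow> 'a \<Rightarrow> 'a \<Rightarrow> bool" where "adj G = snd G"

definition is_graph :: "'a graph \<Rightarrow> bool" where
  "is_graph G \<longleftrightarrow> finite (verts G)
     \<and> (\<forall>u v. adj G u v \<longrightarrow> u \<in> verts G \<and> v \<in> verts G)
     \<and> (\<forall>u v. adj G u v \<longrightarrow> adj G v u)
     \<and> (\<forall>v. \<not> adj G v v)"

definition connected_graph :: "'a graph \<Rightarrow> bool" where
  "connected_graph G \<longleftrightarrow> verts G \<noteq> {}
     \<and> (\<forall>u\<in>verts G. \<forall>v\<in>verts G. (adj G)\<^sup>*\<^sup>* u v)"

definition is_cycle :: "'a graph \<Rightarrow> 'a list \<Rightarrow> bool" where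
  "is_cycle G cs \<longleftrightarrow> length cs \<ge> 3 \<and> distinct cs \<and> set cs \<subseteq> verts G
     \<and> (\<forall>i. Suc i < length cs \<longrightarrow> adj G (cs ! i) (cs ! Suc i))
     \<and> adj G (last cs) (hd cs)"

definition acyclic_graph :: "'a graph \<Rightarrow> bool" where
  "acyclic_graph G \<longleftrightarrow> \<not> (\<exists>cs. is_cycle G cs)"

definition is_tree :: "'a graph \<Rightarrow> bool" where
  "is_tree G \<longleftrightarrow> is_graph G \<and> connected_graph G \<and> acyclic_graph G"

definition dominates :: "'a graph \<Rightarrow> 'a set \<Rightarrow> 'a set \<Rightarrow> bool" where
  "dominates G X S \<longleftrightarrow> (\<forall>v\<in>S. v \<in> X \<or> (\<exists>x\<in>X. adj G v x))"

definition MDS :: "'a graph \<Rightarrow> 'a set \<Rightarrow> nat" where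
  "MDS G S = Min {card X | X. X \<subseteq> verts G \<and> dominates G X S}"

end

theory Submission
  imports Defs
begin

definition padj :: "nat \<Rightarrow> (nat \<Rightarrow> nat) \<Rightarrow> nat \<Rightarrow> nat \<Rightarrow> bool" where
  "padj N p u v \<longleftrightarrow> u < N \<and> v < N \<and> ((0 < u \<and> p u = v) \<or> (0 < v \<and> p v = u))"

lemma ptree:
  assumes N: "0 < N" and P: "\<And>x. 0 < x \<Longrightarrow> x < N \<Longrightarrow> p x < x"
  shows "is_tree ({..<N}, padj N p)"
proof -
  let ?G = "({..<N}, padj N p)"
  have V: "verts ?G = {..<N}" and A: "adj ?G = padj N p" by (auto simp: verts_def adj_def)
  have g1: "padj N p u v \<Longrightarrow> u \<in> {..<N} \<and> v \<in> {..<N}" for u v by (simp add: padj_def)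
  have g2: "padj N p u v \<Longrightarrow> padj N p v u" for u v by (auto simp: padj_def)
  have g3: "\<not> padj N p v v" for v
  proof
    assume "padj N p v v"
    then have "0 < v" "v < N" "p v = v" by (auto simp: padj_def)
    then show False using P[of v] by simp
  qed
  have g: "is_graph ?G" unfolding is_graph_def V A using g1 g2 g3 by blast
  have up: "(padj N p)\<^sup>*\<^sup>* u 0 \<and> (padj N p)\<^sup>*\<^sup>* 0 u" if "u < N" for u
    using that
  proof (induction u rule: less_induct)
    case (less u)
    show ?case
    proof (cases "u = 0")
      case True then show ?thesis by auto
    next
      case False
      then have pu: "p u < u" using P less.prems by auto
      have a1: "padj N p u (p u)" and a2: "padj N p (p u) u"
        using False pu less.prems by (auto simp: padj_def)
      from less.IH[OF pu] pu less.prems have "(padj N p)\<^sup>*\<^sup>* (p u) 0 \<and> (padj N p)\<^sup>*\<^sup>* 0 (p u)" by auto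
      then show ?thesis using a1 a2
        by (meson converse_rtranclp_into_rtranclp rtranclp.rtrancl_into_rtrancl)
    qed
  qed
  have c: "connected_graph ?G" unfolding connected_graph_def V A
  proof (intro conjI ballI)
    show "{..<N} \<noteq> {}" using N by auto
  next
    fix u v assume "u \<in> {..<N}" "v \<in> {..<N}"
    then show "(padj N p)\<^sup>*\<^sup>* u v"
      using rtranclp_trans[OF conjunct1[OF up[of u]] conjunct2[OF up[of v]]] by simp
  qed
  have ac: "acyclic_graph ?G"
    unfolding acyclic_graph_def
  proof
    assume "\<exists>cs. is_cycle ?G cs"
    then obtain cs where cy: "is_cycle ?G cs" by blast
    define l where "l = length cs"
    have l3: "l \<ge> 3" and dis: "distinct cs" and sub: "set cs \<subseteq> {..<N}"
      and st: "\<And>i. Suc i < l \<Longrightarrow> padj N p (cs ! i) (cs ! Suc i)"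
      and lh: "padj N p (last cs) (hd cs)"
      using cy unfolding is_cycle_def V A l_def by auto
    define nx where "nx k = (if Suc k < l then Suc k else 0)" for k
    have nxa: "padj N p (cs ! k) (cs ! nx k)" if "k < l" for k
    proof (cases "Suc k < l")
      case True then show ?thesis using st by (simp add: nx_def)
    next
      case False
      then have "k = l - 1" using that by auto
      moreover have "cs \<noteq> []" using l3 l_def by auto
      ultimately show ?thesis using lh False l_def
        by (simp add: nx_def last_conv_nth hd_conv_nth)
    qed
    have sym: "padj N p a b \<Longrightarrow> padj N p b a" for a b by (auto simp: padj_def)
    define x where "x = Max (set cs)"
    have ne: "set cs \<noteq> {}" using l3 l_def by auto
    have xin: "x \<in> set cs" using ne x_def by simp
    then obtain k where k: "k < l" "cs ! k = x" by (metis in_set_conv_nth l_def)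
    have xm: "\<And>y. y \<in> set cs \<Longrightarrow> y \<le> x" using x_def by simp
    define pv where "pv = (if k = 0 then l - 1 else k - 1)"
    have pvl: "pv < l" and npv: "nx pv = k" using k l3 by (auto simp: pv_def nx_def)
    have e1: "padj N p x (cs ! nx k)" using nxa[OF k(1)] k by simp
    have e2: "padj N p x (cs ! pv)" using nxa[OF pvl] npv k sym by simp
    have nxl: "nx k < l" using k l3 by (auto simp: nx_def)
    have d1: "nx k \<noteq> k" "pv \<noteq> k" "nx k \<noteq> pv" using k l3 by (auto simp: nx_def pv_def)
    have y1: "cs ! nx k \<noteq> x" using d1 nxl k nth_eq_iff_index_eq[OF dis, of "nx k" k] by (simp add: l_def)
    have y2: "cs ! pv \<noteq> x" using d1 pvl k nth_eq_iff_index_eq[OF dis, of pv k] by (simp add: l_def)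
    have y1l: "cs ! nx k \<le> x" using xm nxl l_def by simp
    have y2l: "cs ! pv \<le> x" using xm pvl l_def by simp
    have py: "y = p x" if "padj N p x y" "y < x" for y
    proof -
      have "(0 < x \<and> p x = y) \<or> (0 < y \<and> p y = x)" using that(1) by (simp add: padj_def)
      moreover have "y < N" using that(1) by (simp add: padj_def)
      ultimately show ?thesis using that(2) P[of y] by auto
    qed
    have "cs ! nx k = p x" using py[OF e1] y1 y1l by simp
    moreover have "cs ! pv = p x" using py[OF e2] y2 y2l by simp
    ultimately have "cs ! nx k = cs ! pv" by simp
    then show False using d1 nxl pvl nth_eq_iff_index_eq[OF dis, of "nx k" pv] by (simp add: l_def)
  qed
  show ?thesis using g c ac by (simp add: is_tree_def)
qed

lemma MDS_le:
  assumes "finite (verts G)" "X \<subseteq> verts G" "dominates G X S"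
  shows "MDS G S \<le> card X"
proof -
  have "{card X | X. X \<subseteq> verts G \<and> dominates G X S} \<subseteq> card ` Pow (verts G)" by auto
  then have "finite {card X | X. X \<subseteq> verts G \<and> dominates G X S}"
    using assms(1) finite_subset by blast
  then show ?thesis unfolding MDS_def using assms by (auto intro!: Min_le)
qed

theorem mainTheorem14:
  fixes C :: "nat graph set" and \<alpha> :: real
  assumes "\<forall>G\<in>C. is_graph G"
    and "\<forall>T. is_tree T \<longrightarrow> T \<in> C"
    and "\<alpha> \<ge> 1"
  shows "\<not> (\<exists>A :: nat graph \<Rightarrow> nat set. \<forall>G\<in>C.
            A G \<subseteq> verts G \<and> dominates G (A G) (verts G)
          \<and> real (card (A G)) \<le> \<alpha> * real (MDS G (verts G))
          \<and> (\<forall>S. S \<subseteq> verts G \<longrightarrow> real (card (A G \<inter> S)) \<le> \<alpha> * real (MDS G S)))"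
proof
  assume "\<exists>A :: nat graph \<Rightarrow> nat set. \<forall>G\<in>C.
            A G \<subseteq> verts G \<and> dominates G (A G) (verts G)
          \<and> real (card (A G)) \<le> \<alpha> * real (MDS G (verts G))
          \<and> (\<forall>S. S \<subseteq> verts G \<longrightarrow> real (card (A G \<inter> S)) \<le> \<alpha> * real (MDS G S))"
  then obtain A :: "nat graph \<Rightarrow> nat set" where HA: "\<forall>G\<in>C.
            A G \<subseteq> verts G \<and> dominates G (A G) (verts G)
          \<and> real (card (A G)) \<le> \<alpha> * real (MDS G (verts G))
          \<and> (\<forall>S. S \<subseteq> verts G \<longrightarrow> real (card (A G \<inter> S)) \<le> \<alpha> * real (MDS G S))" by blast
  define n :: nat where "n = nat \<lceil>\<alpha>\<rceil> + 1"
  have na: "\<alpha> < real n" unfolding n_def using assms(3)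
    using le_of_int_ceiling[of \<alpha>] apply simp by linarith
  have n1: "n \<ge> 1" unfolding n_def by simp
  define N where "N = n + 1 + n * n"
  define p where "p x = (if x \<le> n then 0 else (x - (n + 1)) div n + 1)" for x
  have P: "p x < x" if "0 < x" "x < N" for x
  proof (cases "x \<le> n")
    case True then show ?thesis using that by (simp add: p_def)
  next
    case False
    then have "x - (n+1) < n * n" using that N_def by auto
    then have "(x - (n+1)) div n < n" using n1 by (simp add: less_mult_imp_div_less)
    then show ?thesis using False by (simp add: p_def)
  qed
  have pn: "p x \<le> n" if "x < N" for x
  proof (cases "x \<le> n")
    case True then show ?thesis by (simp add: p_def)
  next
    case False
    then have "x - (n+1) < n * n" using that N_def by auto
    then have "(x - (n+1)) div n < n" using n1 by (simp add: less_mult_imp_div_less)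
    then show ?thesis using False by (simp add: p_def)
  qed
  define G where "G = ({..<N}, padj N p)"
  have tr: "is_tree G" unfolding G_def by (rule ptree) (use P N_def in auto)
  then have GC: "G \<in> C" using assms(2) by blast
  have V: "verts G = {..<N}" and Ad: "adj G = padj N p" by (auto simp: verts_def adj_def G_def)
  have fin: "finite (verts G)" using V by simp
  from HA GC have Asub: "A G \<subseteq> {..<N}" and dom: "dominates G (A G) {..<N}"
    and Sb: "\<And>S. S \<subseteq> {..<N} \<Longrightarrow> real (card (A G \<inter> S)) \<le> \<alpha> * real (MDS G S)"
    using V by auto
  have inA: "i \<in> A G" if i: "1 \<le> i" "i \<le> n" for i
  proof (rule ccontr)
    assume ni: "i \<notin> A G"
    define f where "f j = n + 1 + (i - 1) * n + j" for j
    define L where "L = f ` {..<n}"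
    have fL: "n < f j \<and> f j < N \<and> p (f j) = i" if "j < n" for j
    proof -
      have "(i - 1) * n + j < (i - 1) * n + n" using that by simp
      also have "\<dots> = i * n" using i by (cases i) auto
      also have "\<dots> \<le> n * n" using i by simp
      finally have a: "(i - 1) * n + j < n * n" .
      have "f j - (n+1) = (i - 1) * n + j" by (simp add: f_def)
      moreover have "((i - 1) * n + j) div n = i - 1" using that by simp
      ultimately show ?thesis using a i by (simp add: p_def f_def N_def)
    qed
    have LA: "L \<subseteq> A G"
    proof
      fix x assume "x \<in> L"
      then obtain j where j: "j < n" "x = f j" by (auto simp: L_def)
      then have xp: "n < x" "x < N" "p x = i" using fL by auto
      have "x \<in> A G \<or> (\<exists>y\<in>A G. padj N p x y)" using dom xp Ad unfolding dominates_def by auto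
      moreover have "padj N p x y \<Longrightarrow> y = i" for y using xp pn by (fastforce simp: padj_def)
      ultimately show "x \<in> A G" using ni by blast
    qed
    have cL: "card L = n" unfolding L_def by (subst card_image) (auto simp: inj_on_def f_def)
    define S where "S = insert i L"
    have SN: "S \<subseteq> {..<N}" using fL i N_def by (auto simp: S_def L_def)
    have "dominates G {i} S" unfolding dominates_def S_def L_def Ad padj_def using fL i N_def by (auto simp: f_def)
    then have "MDS G S \<le> 1" using MDS_le[OF fin, of "{i}" S] i N_def V by auto
    then have "real (MDS G S) \<le> 1" by simp
    then have "\<alpha> * real (MDS G S) \<le> \<alpha>" using assms(3) mult_left_mono[of "real (MDS G S)" 1 \<alpha>] by simp
    then have "real (card (A G \<inter> S)) \<le> \<alpha>" using Sb[OF SN] by linarith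
    moreover have "L \<subseteq> A G \<inter> S" using LA by (auto simp: S_def)
    then have "card L \<le> card (A G \<inter> S)" using SN by (intro card_mono) (auto intro: finite_subset)
    ultimately show False using cL na by simp
  qed
  define S where "S = {1..n}"
  have SN: "S \<subseteq> {..<N}" by (auto simp: S_def N_def)
  have "dominates G {0} S" unfolding dominates_def S_def Ad padj_def p_def N_def by auto
  then have "MDS G S \<le> 1" using MDS_le[OF fin, of "{0}" S] N_def V by auto
  then have "real (MDS G S) \<le> 1" by simp
  then have "\<alpha> * real (MDS G S) \<le> \<alpha>" using assms(3) mult_left_mono[of "real (MDS G S)" 1 \<alpha>] by simp
  then have "real (card (A G \<inter> S)) \<le> \<alpha>" using Sb[OF SN] by linarith
  moreover have "A G \<inter> S = S" using inA by (auto simp: S_def)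
  ultimately show False using na by (simp add: S_def)
qed

end
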